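(* There is a constant $c_\kappa>0$, depending on $\kappa$ and $c$ but not on $\ell$, such that for every $\ell>1$ and every deterministic $f:\mathbb Z\to[-c,c]$ the following holds. Let $E_n$ be the event that for all $0\le m\le n$ and all $U\in\mathcal U_m$, \[ \big|\bar A(P_UB,f;|U|,n)-\mathbb E_B\bar A(B,f;|U|,n)\big|<c_\kappa\Big(\frac mn\Big)^{1/2-\kappa/4}\ell^{1/2+\kappa/4}n. \] Then $\mathbb P(E_n)\to1$ as $n\to\infty$.
   Context: Let $c>0$ and $0<\kappa<1/3$. $B=(B(i))_{i\ge1}$ are i.i.d. with $\mathbb P(B(i)=\pm1)=1/2$, $\mathbb E_B$ is expectation over $B$. A lazy walk satisfies $|\gamma(i+1)-\gamma(i)|\le1$; for $b:\mathbb N\to\{\pm1\}$ the action of a lazy walk $\gamma$ on $\{0,\dots,k\}$ is $A(b,f;\gamma)=\sum_{i=1}^kb(i)f(\gamma(i))$ and $\bar A(b,f;k,x)$ is its minimum over lazy walks from $(0,0)$ to $(k,x)$. For a set $U=\{u_1<u_2<\cdots\}$ of positive integers, $(P_Ub)(j)=b(u_j)$. Assume $\ell n$ is an integer (integer parts omitted). $\mathcal U_m$ is the family of subsets $U\subset\{1,\dots,\ell n\}$ with $|U|\ge n$ of the form $U=\{1,\dots,\ell n\}\setminus\bigcup_{i=0}^m(a_i,z_i]$ for some disjoint integer intervals $(a_i,z_i]\subset\{1,\dots,\ell n\}$. *)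

theory Defs
  imports "HOL-Probability.Probability"
begin

text \<open>Law of the i.i.d. symmetric sign sequence B = (B(i))_{i\<ge>1} (coordinate 0 unused).\<close>
definition sign_seq_measure :: "(nat \<Rightarrow> int) measure" where
  "sign_seq_measure = PiM UNIV (\<lambda>_::nat. measure_pmf (pmf_of_set {-1, 1::int}))"

definition lazy_walk :: "(nat \<Rightarrow> int) \<Rightarrow> nat \<Rightarrow> int \<Rightarrow> bool" where
  "lazy_walk \<gamma> k x \<longleftrightarrow> \<gamma> 0 = 0 \<and> \<gamma> k = x \<and> (\<forall>i<k. \<bar>\<gamma> (Suc i) - \<gamma> i\<bar> \<le> 1)"

definition action :: "(nat \<Rightarrow> int) \<Rightarrow> (int \<Rightarrow> real) \<Rightarrow> nat \<Rightarrow> (nat \<Rightarrow> int) \<Rightarrow> real" where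
  "action b f k \<gamma> = (\<Sum>i=1..k. real_of_int (b i) * f (\<gamma> i))"

definition min_action :: "(nat \<Rightarrow> int) \<Rightarrow> (int \<Rightarrow> real) \<Rightarrow> nat \<Rightarrow> int \<Rightarrow> real" where
  "min_action b f k x = Min {action b f k \<gamma> | \<gamma>. lazy_walk \<gamma> k x}"

text \<open>(P_U b)(j) = b(u_j) where u_1 < u_2 < ... enumerate the finite set U.\<close>
definition proj_U :: "nat set \<Rightarrow> (nat \<Rightarrow> int) \<Rightarrow> nat \<Rightarrow> int" where
  "proj_U U b j = b (sorted_list_of_set U ! (j - 1))"

text \<open>The family \<U>_m for L = l n (here L is the length, n the size threshold).\<close>
definition U_family :: "nat \<Rightarrow> nat \<Rightarrow> nat \<Rightarrow> nat set set" where
  "U_family L n m = {U. U \<subseteq> {1..L} \<and> card U \<ge> n \<and>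
     (\<exists>a z :: nat \<Rightarrow> nat.
        (\<forall>i\<le>m. a i \<le> z i \<and> z i \<le> L) \<and>
        (\<forall>i\<le>m. \<forall>j\<le>m. i \<noteq> j \<longrightarrow> {a i<..z i} \<inter> {a j<..z j} = {}) \<and>
        U = {1..L} - (\<Union>i\<le>m. {a i<..z i}))}"

end

theory Submission
  imports Defs
begin


definition SS :: "nat set \<Rightarrow> (nat \<Rightarrow> int) set" where
  "SS I = PiE I (\<lambda>_. {-1,1})"

lemma finite_SS: "finite I \<Longrightarrow> finite (SS I)"
  unfolding SS_def by (intro finite_PiE) auto

lemma card_SS: "finite I \<Longrightarrow> card (SS I) = 2 ^ card I"
  unfolding SS_def by (simp add: card_PiE numeral_2_eq_2)

lemma sum_SS_insert:
  assumes "finite I" "i \<notin> I"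
  shows "(\<Sum>b\<in>SS (insert i I). F b) = (\<Sum>b\<in>SS I. F (b(i:=1)) + F (b(i:=-1)))"
proof -
  have "(\<Sum>b\<in>SS (insert i I). F b) = (\<Sum>p\<in>{-1,1::int} \<times> SS I. F ((\<lambda>(y, g). g(i := y)) p))"
    unfolding SS_def PiE_insert_eq
    by (subst sum.reindex) (use inj_combinator[OF assms(2), of "\<lambda>_. {-1,1::int}"] in auto)
  also have "\<dots> = (\<Sum>y\<in>{-1,1::int}. \<Sum>b\<in>SS I. F (b(i:=y)))"
    by (simp add: sum.cartesian_product split_def)
  also have "\<dots> = (\<Sum>b\<in>SS I. F (b(i:=1)) + F (b(i:=-1)))"
    by (simp add: sum.distrib add.commute)
  finally show ?thesis .
qed

lemma SS_upd: "b \<in> SS I \<Longrightarrow> s \<in> {-1,1} \<Longrightarrow> b(i:=s) \<in> SS (insert i I)"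
  unfolding SS_def by (auto simp: PiE_iff extensional_def)

lemma cosh_bound: "(exp (x::real) + exp (-x)) / 2 \<le> exp (x\<^sup>2 / 2)"
proof -
  have key: "(exp y + exp (-y)) / 2 \<le> exp (y\<^sup>2 / 2)" if "y \<ge> 0" for y :: real
  proof -
    have "-(2*y) * (1/2) + ln (1 + (1/2) * (exp (2*y) - 1)) \<le> (2*y)\<^sup>2 / 8"
      using Hoeffdings_lemma_aux[of "2*y" "1/2"] that by simp
    hence "ln ((1 + exp (2*y)) / 2) \<le> y + y\<^sup>2 / 2"
      by (simp add: power2_eq_square field_simps)
    hence "exp (ln ((1 + exp (2*y)) / 2)) \<le> exp (y + y\<^sup>2/2)"
      by simp
    hence "(1 + exp (2*y)) / 2 \<le> exp (y + y\<^sup>2/2)"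
      by (subst (asm) exp_ln) (auto intro: add_pos_pos)
    hence "exp (-y) * ((1 + exp (2*y)) / 2) \<le> exp (-y) * exp (y + y\<^sup>2/2)"
      by (intro mult_left_mono) auto
    moreover have "exp (-y) * ((1 + exp (2*y)) / 2) = (exp y + exp (-y)) / 2"
      by (simp add: field_simps flip: exp_add)
    moreover have "exp (-y) * exp (y + y\<^sup>2/2) = exp (y\<^sup>2/2)"
      by (simp flip: exp_add)
    ultimately show ?thesis by simp
  qed
  show ?thesis
  proof (cases "x \<ge> 0")
    case True thus ?thesis using key by simp
  next
    case False thus ?thesis using key[of "-x"] by (simp add: add.commute)
  qed
qed

lemma avg2_abs: "\<bar>x1-y1\<bar> \<le> d \<Longrightarrow> \<bar>x2-y2\<bar> \<le> d \<Longrightarrow> \<bar>(x1+x2)/2 - (y1+y2)/2\<bar> \<le> (d::real)"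
  by (auto simp: abs_le_iff field_simps)

definition avg :: "nat set \<Rightarrow> ((nat \<Rightarrow> int) \<Rightarrow> real) \<Rightarrow> real" where
  "avg I g = (\<Sum>b\<in>SS I. g b) / 2 ^ card I"

lemma SS_empty[simp]: "SS {} = {\<lambda>_. undefined}"
  by (simp add: SS_def)

lemma SS_flip: "b \<in> SS I \<Longrightarrow> i \<in> I \<Longrightarrow> b(i := - b i) \<in> SS I"
  unfolding SS_def by (auto simp: PiE_iff extensional_def)

lemma mgf_bound:
  fixes g :: "(nat \<Rightarrow> int) \<Rightarrow> real" and d t :: real
  assumes "finite I" "d \<ge> 0" "\<forall>b\<in>SS I. \<forall>i\<in>I. \<bar>g b - g (b(i := - b i))\<bar> \<le> d"
  shows "(\<Sum>b\<in>SS I. exp (l * (g b - avg I g))) \<le> 2 ^ card I * exp (l\<^sup>2 * card I * d\<^sup>2 / 8)"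
  using assms(1,3)
proof (induction I arbitrary: g rule: finite_induct)
  case empty
  then show ?case by (simp add: avg_def)
next
  case (insert i I g)
  define h where "h b = (g (b(i:=1)) + g (b(i:=-1))) / 2" for b
  have avg_eq: "avg (insert i I) g = avg I h"
    unfolding avg_def h_def using insert.hyps
    by (simp add: sum_SS_insert sum_divide_distrib[symmetric] field_simps)
  have mem1: "b(i:=s) \<in> SS (insert i I)" if "b \<in> SS I" "s \<in> {-1,1}" for b s
    using SS_upd that by blast
  have hb: "\<forall>b\<in>SS I. \<forall>j\<in>I. \<bar>h b - h (b(j := - b j))\<bar> \<le> d"
  proof (intro ballI)
    fix b j assume b: "b \<in> SS I" and j: "j \<in> I"
    have ij: "j \<noteq> i" using j insert.hyps by auto
    have "\<bar>g (b(i:=s)) - g (b(j := - b j, i := s))\<bar> \<le> d" if "s \<in> {-1,1}" for s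
    proof -
      define c where "c = b(i:=s)"
      have e: "b(j := - b j, i := s) = c(j := - c j)"
        using ij by (auto simp: fun_eq_iff c_def)
      have cm: "c \<in> SS (insert i I)" using mem1[OF b that] c_def by simp
      have jm: "j \<in> insert i I" using j by simp
      have "\<bar>g c - g (c(j := - c j))\<bar> \<le> d" using insert.prems cm jm by blast
      thus ?thesis unfolding e c_def .
    qed
    from this[of 1] this[of "-1"] show "\<bar>h b - h (b(j := - b j))\<bar> \<le> d"
      unfolding h_def by (intro avg2_abs) simp_all
  qed
  have IH: "(\<Sum>b\<in>SS I. exp (l * (h b - avg I h))) \<le> 2 ^ card I * exp (l\<^sup>2 * card I * d\<^sup>2 / 8)"
    using insert.IH[OF hb] .
  have trm: "exp (l * (g (b(i:=1)) - avg I h)) + exp (l * (g (b(i:=-1)) - avg I h))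
      \<le> 2 * exp (l\<^sup>2 * d\<^sup>2 / 8) * exp (l * (h b - avg I h))" if b: "b \<in> SS I" for b
  proof -
    define \<delta> where "\<delta> = (g (b(i:=1)) - g (b(i:=-1))) / 2"
    have "b(i:=1) \<in> SS (insert i I)" using mem1[OF b] by auto
    hence "\<bar>g (b(i:=1)) - g ((b(i:=1))(i := - (b(i:=1)) i))\<bar> \<le> d"
      using insert.prems by blast
    moreover have "(b(i:=1))(i := - (b(i:=1)) i) = b(i := -1)" by simp
    ultimately have "\<bar>g (b(i:=1)) - g (b(i := -1))\<bar> \<le> d" by simp
    hence "\<bar>\<delta>\<bar> \<le> d / 2" unfolding \<delta>_def by auto
    hence "\<delta>\<^sup>2 \<le> (d/2)\<^sup>2" by (metis abs_ge_zero power2_abs power_mono)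
    hence sq: "(l*\<delta>)\<^sup>2 / 2 \<le> l\<^sup>2 * d\<^sup>2 / 8"
    proof -
      have "l\<^sup>2 * \<delta>\<^sup>2 \<le> l\<^sup>2 * (d/2)\<^sup>2" by (intro mult_left_mono) (use \<open>\<delta>\<^sup>2 \<le> (d/2)\<^sup>2\<close> in auto)
      thus ?thesis by (simp add: power_mult_distrib power_divide algebra_simps)
    qed
    have g1: "g (b(i:=1)) = h b + \<delta>" and g2: "g (b(i:=-1)) = h b - \<delta>"
      unfolding h_def \<delta>_def by (auto simp: field_simps)
    have "exp (l * (g (b(i:=1)) - avg I h)) + exp (l * (g (b(i:=-1)) - avg I h))
        = exp (l * (h b - avg I h)) * (exp (l*\<delta>) + exp (-(l*\<delta>)))"
      unfolding g1 g2 by (simp add: algebra_simps flip: exp_add)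
    also have "\<dots> \<le> exp (l * (h b - avg I h)) * (2 * exp (l\<^sup>2 * d\<^sup>2 / 8))"
    proof (intro mult_left_mono)
      have "exp (l*\<delta>) + exp (-(l*\<delta>)) \<le> 2 * exp ((l*\<delta>)\<^sup>2 / 2)"
        using cosh_bound[of "l*\<delta>"] by simp
      also have "\<dots> \<le> 2 * exp (l\<^sup>2 * d\<^sup>2 / 8)" using sq by simp
      finally show "exp (l*\<delta>) + exp (-(l*\<delta>)) \<le> 2 * exp (l\<^sup>2 * d\<^sup>2 / 8)" .
    qed simp
    finally show ?thesis by (simp add: algebra_simps)
  qed
  have "(\<Sum>b\<in>SS (insert i I). exp (l * (g b - avg (insert i I) g)))
      = (\<Sum>b\<in>SS I. exp (l * (g (b(i:=1)) - avg I h)) + exp (l * (g (b(i:=-1)) - avg I h)))"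
    unfolding avg_eq using insert.hyps by (simp add: sum_SS_insert)
  also have "\<dots> \<le> (\<Sum>b\<in>SS I. 2 * exp (l\<^sup>2 * d\<^sup>2 / 8) * exp (l * (h b - avg I h)))"
    by (intro sum_mono trm)
  also have "\<dots> = 2 * exp (l\<^sup>2 * d\<^sup>2 / 8) * (\<Sum>b\<in>SS I. exp (l * (h b - avg I h)))"
    by (simp add: sum_distrib_left)
  also have "\<dots> \<le> 2 * exp (l\<^sup>2 * d\<^sup>2 / 8) * (2 ^ card I * exp (l\<^sup>2 * card I * d\<^sup>2 / 8))"
    by (intro mult_left_mono IH) auto
  also have "\<dots> = 2 ^ card (insert i I) * exp (l\<^sup>2 * card (insert i I) * d\<^sup>2 / 8)"
    using insert.hyps by (simp add: field_simps flip: exp_add)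
  finally show ?case .
qed

lemma card_le_sum:
  assumes "finite S" "\<And>x. x \<in> S \<Longrightarrow> f x \<ge> (0::real)" "\<And>x. x \<in> S \<Longrightarrow> P x \<Longrightarrow> f x \<ge> 1"
  shows "real (card {x\<in>S. P x}) \<le> (\<Sum>x\<in>S. f x)"
proof -
  have "real (card {x\<in>S. P x}) = (\<Sum>x\<in>{x\<in>S. P x}. 1)" by simp
  also have "\<dots> \<le> (\<Sum>x\<in>{x\<in>S. P x}. f x)" by (intro sum_mono) (use assms in auto)
  also have "\<dots> \<le> (\<Sum>x\<in>S. f x)" by (intro sum_mono2) (use assms in auto)
  finally show ?thesis .
qed

lemma tail_one:
  fixes g :: "(nat \<Rightarrow> int) \<Rightarrow> real" and d t :: real
  assumes "finite I" "d > 0" "card I > 0" "t > 0"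
    "\<forall>b\<in>SS I. \<forall>i\<in>I. \<bar>g b - g (b(i := - b i))\<bar> \<le> d"
  shows "real (card {b\<in>SS I. g b - avg I g \<ge> t}) \<le> 2 ^ card I * exp (- 2 * t\<^sup>2 / (card I * d\<^sup>2))"
proof -
  define N where "N = real (card I)"
  have N: "N > 0" using assms N_def by simp
  define l where "l = 4 * t / (N * d\<^sup>2)"
  have l: "l > 0" using assms N unfolding l_def by simp
  have "real (card {b\<in>SS I. g b - avg I g \<ge> t}) \<le> (\<Sum>b\<in>SS I. exp (l * (g b - avg I g) - l * t))"
  proof (rule card_le_sum)
    fix b assume "b \<in> SS I" "g b - avg I g \<ge> t"
    hence "l * (g b - avg I g) - l * t \<ge> 0" using l by (simp add: mult_left_mono flip: right_diff_distrib)
    thus "exp (l * (g b - avg I g) - l * t) \<ge> 1" by simp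
  qed (use assms finite_SS in auto)
  also have "\<dots> = exp (- l * t) * (\<Sum>b\<in>SS I. exp (l * (g b - avg I g)))"
    by (simp add: sum_distrib_left flip: exp_add)
  also have "\<dots> \<le> exp (- l * t) * (2 ^ card I * exp (l\<^sup>2 * card I * d\<^sup>2 / 8))"
    by (intro mult_left_mono mgf_bound) (use assms in auto)
  also have "\<dots> = 2 ^ card I * exp (- 2 * t\<^sup>2 / (card I * d\<^sup>2))"
  proof -
    have "- l * t + l\<^sup>2 * N * d\<^sup>2 / 8 = - 2 * t\<^sup>2 / (N * d\<^sup>2)"
      unfolding l_def using N assms by (simp add: field_simps power2_eq_square)
    thus ?thesis unfolding N_def by (simp add: algebra_simps flip: exp_add)
  qed
  finally show ?thesis .
qed

lemma avg_uminus: "avg I (\<lambda>b. - g b) = - avg I g"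
  by (simp add: avg_def sum_negf)

lemma tail_bound:
  fixes g :: "(nat \<Rightarrow> int) \<Rightarrow> real" and d t :: real
  assumes "finite I" "d > 0" "card I > 0" "t > 0"
    "\<forall>b\<in>SS I. \<forall>i\<in>I. \<bar>g b - g (b(i := - b i))\<bar> \<le> d"
  shows "real (card {b\<in>SS I. \<bar>g b - avg I g\<bar> \<ge> t}) \<le> 2 * 2 ^ card I * exp (- 2 * t\<^sup>2 / (card I * d\<^sup>2))"
proof -
  have h2: "\<forall>b\<in>SS I. \<forall>i\<in>I. \<bar>(- g b) - (- g (b(i := - b i)))\<bar> \<le> d"
    using assms(5) by (simp add: abs_minus_commute)
  have "{b\<in>SS I. \<bar>g b - avg I g\<bar> \<ge> t} \<subseteq> {b\<in>SS I. g b - avg I g \<ge> t} \<union> {b\<in>SS I. (- g b) - avg I (\<lambda>b. - g b) \<ge> t}"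
    by (auto simp: avg_uminus abs_if split: if_splits)
  hence "card {b\<in>SS I. \<bar>g b - avg I g\<bar> \<ge> t} \<le> card ({b\<in>SS I. g b - avg I g \<ge> t} \<union> {b\<in>SS I. (- g b) - avg I (\<lambda>b. - g b) \<ge> t})"
    by (intro card_mono) (use assms finite_SS in auto)
  also have "\<dots> \<le> card {b\<in>SS I. g b - avg I g \<ge> t} + card {b\<in>SS I. (- g b) - avg I (\<lambda>b. - g b) \<ge> t}"
    by (rule card_Un_le)
  finally have "real (card {b\<in>SS I. \<bar>g b - avg I g\<bar> \<ge> t}) \<le> real (card {b\<in>SS I. g b - avg I g \<ge> t}) + real (card {b\<in>SS I. (- g b) - avg I (\<lambda>b. - g b) \<ge> t})"
    by linarith
  also have "\<dots> \<le> 2 ^ card I * exp (- 2 * t\<^sup>2 / (card I * d\<^sup>2)) + 2 ^ card I * exp (- 2 * t\<^sup>2 / (card I * d\<^sup>2))"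
    by (intro add_mono tail_one[OF assms] tail_one[where g="\<lambda>b. - g b", OF assms(1-4) h2])
  finally show ?thesis by simp
qed



abbreviation M0 :: "int measure" where "M0 \<equiv> measure_pmf (pmf_of_set {-1, 1::int})"

lemma S_def': "sign_seq_measure = PiM UNIV (\<lambda>_. M0)"
  by (simp add: sign_seq_measure_def)

lemma space_S[simp]: "space sign_seq_measure = UNIV"
  by (simp add: sign_seq_measure_def space_PiM)

lemma prob_S: "prob_space sign_seq_measure"
  unfolding sign_seq_measure_def by (intro prob_space_PiM measure_pmf.prob_space_axioms)

interpretation S: prob_space sign_seq_measure by (rule prob_S)

definition cyl :: "nat set \<Rightarrow> (nat \<Rightarrow> int) \<Rightarrow> (nat \<Rightarrow> int) set" where
  "cyl J b = {B. \<forall>j\<in>J. B j = b j}"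

lemma cyl_emb: "cyl J b = prod_emb UNIV (\<lambda>_. M0) J (PiE J (\<lambda>j. {b j}))"
  by (auto simp: cyl_def prod_emb_def PiE_iff)

lemma cyl_sets: "finite J \<Longrightarrow> cyl J b \<in> sets sign_seq_measure"
  unfolding cyl_emb sign_seq_measure_def by (intro sets_PiM_I) auto

lemma cyl_measure:
  assumes "finite J" "b \<in> SS J"
  shows "measure sign_seq_measure (cyl J b) = 1 / 2 ^ card J"
proof -
  have "emeasure sign_seq_measure (cyl J b) = (\<Prod>j\<in>J. emeasure M0 {b j})"
    unfolding cyl_emb sign_seq_measure_def
    by (rule emeasure_PiM_emb) (use assms in \<open>auto intro: measure_pmf.prob_space_axioms\<close>)
  also have "\<dots> = (\<Prod>j\<in>J. ennreal (1/2))"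
  proof (intro prod.cong refl)
    fix j assume "j \<in> J"
    hence "b j \<in> {-1,1}" using assms by (auto simp: SS_def PiE_iff)
    thus "emeasure M0 {b j} = ennreal (1/2)"
      by (simp add: emeasure_pmf_single pmf_of_set)
  qed
  also have "\<dots> = ennreal (1/2) ^ card J" by (rule prod_constant)
  also have "\<dots> = ennreal ((1/2) ^ card J)" by (rule ennreal_power) simp
  finally show ?thesis
    by (simp add: measure_def power_divide)
qed

definition badc :: "nat \<Rightarrow> (nat \<Rightarrow> int) set" where
  "badc j = {B. B j \<notin> {-1,1}}"

lemma badc_null: "badc j \<in> null_sets sign_seq_measure"
proof -
  have e: "badc j = prod_emb UNIV (\<lambda>_. M0) {j} (PiE {j} (\<lambda>_. - {-1,1}))"
    by (auto simp: badc_def prod_emb_def PiE_iff)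
  have "emeasure sign_seq_measure (badc j) = (\<Prod>i\<in>{j}. emeasure M0 (- {-1,1}))"
    unfolding e sign_seq_measure_def
    by (rule emeasure_PiM_emb) (auto intro: measure_pmf.prob_space_axioms)
  also have "\<dots> = 0"
    by (simp add: measure_pmf.emeasure_eq_measure measure_pmf_zero_iff)
  finally show ?thesis
    unfolding e sign_seq_measure_def by (auto intro!: sets_PiM_I simp: null_sets_def)
qed

lemma restrict_sets:
  assumes "finite J"
  shows "{B. restrict B J \<in> A} \<in> sets sign_seq_measure"
proof -
  have "{B. restrict B J \<in> A} = (\<Union>b\<in>A \<inter> PiE J (\<lambda>_. UNIV). cyl J b)"
  proof (intro set_eqI iffI)
    fix B assume "B \<in> {B. restrict B J \<in> A}"
    thus "B \<in> (\<Union>b\<in>A \<inter> PiE J (\<lambda>_. UNIV). cyl J b)"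
      by (intro UN_I[of "restrict B J"]) (auto simp: cyl_def)
  next
    fix B assume "B \<in> (\<Union>b\<in>A \<inter> PiE J (\<lambda>_. UNIV). cyl J b)"
    then obtain b where b: "b \<in> A" "b \<in> PiE J (\<lambda>_. UNIV)" "\<forall>j\<in>J. B j = b j"
      by (auto simp: cyl_def)
    have "restrict B J = b" using b(2,3) by (auto simp: fun_eq_iff PiE_iff extensional_def)
    thus "B \<in> {B. restrict B J \<in> A}" using b(1) by simp
  qed
  also have "\<dots> \<in> sets sign_seq_measure"
    by (intro sets.countable_UN'' countable_Int2 countable_PiE cyl_sets assms) auto
  finally show ?thesis .
qed

lemma restrict_measure_le:
  assumes "finite J"
  shows "measure sign_seq_measure {B. restrict B J \<in> A} \<le> real (card (A \<inter> SS J)) / 2 ^ card J"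
proof -
  have fin: "finite (A \<inter> SS J)" using finite_SS[OF assms] by auto
  have sub: "{B. restrict B J \<in> A} \<subseteq> (\<Union>b\<in>A \<inter> SS J. cyl J b) \<union> (\<Union>j\<in>J. badc j)"
  proof
    fix B assume B: "B \<in> {B. restrict B J \<in> A}"
    show "B \<in> (\<Union>b\<in>A \<inter> SS J. cyl J b) \<union> (\<Union>j\<in>J. badc j)"
    proof (cases "\<forall>j\<in>J. B j \<in> {-1,1}")
      case True
      hence "restrict B J \<in> SS J" by (auto simp: SS_def)
      moreover have "B \<in> cyl J (restrict B J)" by (simp add: cyl_def)
      ultimately show ?thesis using B by blast
    next
      case False thus ?thesis by (auto simp: badc_def)
    qed
  qed
  have z: "measure sign_seq_measure (\<Union>j\<in>J. badc j) = 0"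
  proof -
    have "(\<Union>j\<in>J. badc j) \<in> null_sets sign_seq_measure"
      using badc_null assms by (intro null_sets.finite_UN) auto
    thus ?thesis by (simp add: measure_def null_setsD1)
  qed
  have "measure sign_seq_measure {B. restrict B J \<in> A}
      \<le> measure sign_seq_measure ((\<Union>b\<in>A \<inter> SS J. cyl J b) \<union> (\<Union>j\<in>J. badc j))"
    by (intro S.finite_measure_mono sub sets.Un sets.finite_UN fin assms cyl_sets)
       (use badc_null in auto)
  also have "\<dots> \<le> measure sign_seq_measure (\<Union>b\<in>A \<inter> SS J. cyl J b) + measure sign_seq_measure (\<Union>j\<in>J. badc j)"
    by (intro measure_subadditive sets.finite_UN fin assms cyl_sets S.emeasure_finite) (use badc_null in auto)
  also have "\<dots> = measure sign_seq_measure (\<Union>b\<in>A \<inter> SS J. cyl J b)"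
    using z by simp
  also have "\<dots> \<le> (\<Sum>b\<in>A \<inter> SS J. measure sign_seq_measure (cyl J b))"
    by (intro S.finite_measure_subadditive_finite fin) (use cyl_sets assms in auto)
  also have "\<dots> = (\<Sum>b\<in>A \<inter> SS J. 1 / 2 ^ card J)"
    by (intro sum.cong refl cyl_measure assms) auto
  also have "\<dots> = real (card (A \<inter> SS J)) / 2 ^ card J" by simp
  finally show ?thesis .
qed

lemma restrict_measurable:
  assumes "finite J"
  shows "(\<lambda>B. restrict B J) \<in> measurable sign_seq_measure (count_space UNIV)"
proof (rule measurableI)
  fix A :: "(nat \<Rightarrow> int) set" assume "A \<in> sets (count_space UNIV)"
  have "(\<lambda>B. restrict B J) -` A \<inter> space sign_seq_measure = {B. restrict B J \<in> A}" by auto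
  thus "(\<lambda>B. restrict B J) -` A \<inter> space sign_seq_measure \<in> sets sign_seq_measure"
    using restrict_sets[OF assms] by simp
qed simp

lemma restrict_borel:
  assumes "finite J"
  shows "(\<lambda>B. h (restrict B J) :: real) \<in> borel_measurable sign_seq_measure"
  using measurable_comp[OF restrict_measurable[OF assms], of h borel] by (simp add: o_def)

lemma restrict_integral:
  fixes h :: "(nat \<Rightarrow> int) \<Rightarrow> real"
  assumes "finite J"
  shows "(\<integral>B. h (restrict B J) \<partial>sign_seq_measure) = (\<Sum>b\<in>SS J. h b) / 2 ^ card J"
proof -
  have ae: "AE B in sign_seq_measure. h (restrict B J) = (\<Sum>b\<in>SS J. h b * indicator (cyl J b) B)"
  proof (rule AE_I')
    show "(\<Union>j\<in>J. badc j) \<in> null_sets sign_seq_measure"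
      using badc_null assms by (intro null_sets.finite_UN) auto
  next
    show "{B \<in> space sign_seq_measure. h (restrict B J) \<noteq> (\<Sum>b\<in>SS J. h b * indicator (cyl J b) B)} \<subseteq> (\<Union>j\<in>J. badc j)"
    proof (intro subsetI, rule ccontr)
      fix B assume B: "B \<in> {B \<in> space sign_seq_measure. h (restrict B J) \<noteq> (\<Sum>b\<in>SS J. h b * indicator (cyl J b) B)}"
        and nb: "B \<notin> (\<Union>j\<in>J. badc j)"
      have rB: "restrict B J \<in> SS J" using nb by (auto simp: badc_def SS_def)
      have ind: "indicator (cyl J b) B = (if b = restrict B J then 1 else 0 :: real)" if "b \<in> SS J" for b
        using that by (auto simp: cyl_def SS_def PiE_iff extensional_def fun_eq_iff indicator_def) (metis)
      have "(\<Sum>b\<in>SS J. h b * indicator (cyl J b) B) = (\<Sum>b\<in>SS J. if b = restrict B J then h b else 0)"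
        by (intro sum.cong refl) (simp add: ind)
      also have "\<dots> = h (restrict B J)"
        using rB finite_SS[OF assms] by (simp add: sum.delta')
      finally show False using B by simp
    qed
  qed
  have "(\<integral>B. h (restrict B J) \<partial>sign_seq_measure) = (\<integral>B. (\<Sum>b\<in>SS J. h b * indicator (cyl J b) B) \<partial>sign_seq_measure)"
    by (intro integral_cong_AE ae restrict_borel assms) (use cyl_sets[OF assms] in auto)
  also have "\<dots> = (\<Sum>b\<in>SS J. (\<integral>B. h b * indicator (cyl J b) B \<partial>sign_seq_measure))"
  proof (rule Bochner_Integration.integral_sum[where f="\<lambda>b B. h b * indicator (cyl J b) B"])
    fix b assume "b \<in> SS J"
    show "integrable sign_seq_measure (\<lambda>B. h b * indicator (cyl J b) B)"
      using cyl_sets[OF assms] by (intro integrable_mult_right) (simp add: integrable_indicator_iff S.emeasure_finite less_top[symmetric])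
  qed
  also have "\<dots> = (\<Sum>b\<in>SS J. h b * measure sign_seq_measure (cyl J b))"
    by simp
  also have "\<dots> = (\<Sum>b\<in>SS J. h b / 2 ^ card J)"
    by (intro sum.cong refl) (simp add: cyl_measure assms)
  also have "\<dots> = (\<Sum>b\<in>SS J. h b) / 2 ^ card J"
    by (simp add: sum_divide_distrib)
  finally show ?thesis .
qed



lemma action_cong:
  assumes "\<forall>i\<in>{1..k}. b i = b' i"
  shows "action b f k \<gamma> = action b' f k \<gamma>"
  unfolding action_def using assms by (intro sum.cong) auto

lemma min_action_img: "min_action b f k x = Min ((\<lambda>\<gamma>. action b f k \<gamma>) ` {\<gamma>. lazy_walk \<gamma> k x})"
  unfolding min_action_def by (rule arg_cong[where f=Min]) auto

lemma min_action_cong: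
  assumes "\<forall>i\<in>{1..k}. b i = b' i"
  shows "min_action b f k x = min_action b' f k x"
  unfolding min_action_img using action_cong[OF assms] by simp

lemma lazy_walk_bound:
  assumes "lazy_walk \<gamma> k x" "i \<le> k"
  shows "\<bar>\<gamma> i\<bar> \<le> int i"
  using assms(2)
proof (induction i)
  case 0 thus ?case using assms(1) by (simp add: lazy_walk_def)
next
  case (Suc i)
  hence "\<bar>\<gamma> (Suc i) - \<gamma> i\<bar> \<le> 1" using assms(1) by (simp add: lazy_walk_def)
  with Suc show ?case by simp
qed

lemma finite_actions: "finite ((\<lambda>\<gamma>. action b f k \<gamma>) ` {\<gamma>. lazy_walk \<gamma> k x})"
proof -
  define F where "F = PiE_dflt {..k} (0::int) (\<lambda>_. {-int k..int k})"
  have fin: "finite F" unfolding F_def by (intro finite_PiE_dflt) auto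
  have "(\<lambda>\<gamma>. action b f k \<gamma>) ` {\<gamma>. lazy_walk \<gamma> k x} \<subseteq> (\<lambda>\<gamma>. action b f k \<gamma>) ` F"
  proof
    fix a assume "a \<in> (\<lambda>\<gamma>. action b f k \<gamma>) ` {\<gamma>. lazy_walk \<gamma> k x}"
    then obtain \<gamma> where g: "lazy_walk \<gamma> k x" "a = action b f k \<gamma>" by auto
    define \<gamma>' where "\<gamma>' = (\<lambda>i. if i \<le> k then \<gamma> i else 0)"
    have "\<gamma>' \<in> F" unfolding F_def PiE_dflt_def \<gamma>'_def
      using lazy_walk_bound[OF g(1)] by (auto simp: abs_le_iff) (smt (verit) of_nat_mono)+
    moreover have "action b f k \<gamma>' = a" unfolding g(2) action_def \<gamma>'_def by (intro sum.cong) auto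
    ultimately show "a \<in> (\<lambda>\<gamma>. action b f k \<gamma>) ` F" by (metis image_eqI)
  qed
  thus ?thesis using fin finite_subset by blast
qed

lemma walk_exists:
  assumes "n \<le> k"
  shows "lazy_walk (\<lambda>i. int (min i n)) k (int n)"
  using assms unfolding lazy_walk_def by auto

lemma Min_lip:
  fixes F G :: "'a \<Rightarrow> real"
  assumes "finite (F ` W)" "finite (G ` W)" "W \<noteq> {}" "\<forall>w\<in>W. \<bar>F w - G w\<bar> \<le> D"
  shows "\<bar>Min (F ` W) - Min (G ` W)\<bar> \<le> D"
proof -
  obtain w1 where w1: "w1 \<in> W" "Min (F ` W) = F w1" using Min_in[OF assms(1)] assms(3) by auto
  obtain w2 where w2: "w2 \<in> W" "Min (G ` W) = G w2" using Min_in[OF assms(2)] assms(3) by auto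
  have "F w1 \<le> F w2" using w1 Min_le[OF assms(1)] w2(1) by fastforce
  moreover have "G w2 \<le> G w1" using w2 Min_le[OF assms(2)] w1(1) by fastforce
  moreover have "\<bar>F w1 - G w1\<bar> \<le> D" "\<bar>F w2 - G w2\<bar> \<le> D" using assms(4) w1 w2 by auto
  ultimately show ?thesis using w1 w2 by (simp add: abs_le_iff)
qed

lemma min_action_lip:
  assumes "n \<le> k" "\<forall>\<gamma>. \<bar>action b f k \<gamma> - action b' f k \<gamma>\<bar> \<le> D"
  shows "\<bar>min_action b f k (int n) - min_action b' f k (int n)\<bar> \<le> D"
  unfolding min_action_img
  by (rule Min_lip[OF finite_actions finite_actions]) (use walk_exists[OF assms(1)] assms(2) in auto)



lemma sl_props:
  assumes "finite U"
  shows "distinct (sorted_list_of_set U)" "set (sorted_list_of_set U) = U"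
        "length (sorted_list_of_set U) = card U"
  using assms by auto

lemma sl_in:
  assumes "finite U" "j \<in> {1..card U}"
  shows "sorted_list_of_set U ! (j - 1) \<in> U"
proof -
  have "j - 1 < length (sorted_list_of_set U)" using assms by auto
  hence "sorted_list_of_set U ! (j - 1) \<in> set (sorted_list_of_set U)" by (rule nth_mem)
  thus ?thesis using assms by simp
qed

lemma sum_sl:
  assumes "finite U"
  shows "(\<Sum>j\<in>{1..card U}. \<phi> (sorted_list_of_set U ! (j - 1))) = (\<Sum>u\<in>U. \<phi> u)"
proof -
  have "(\<Sum>j\<in>{1..card U}. \<phi> (sorted_list_of_set U ! (j - 1))) = (\<Sum>j<card U. \<phi> (sorted_list_of_set U ! j))"
    using sum.atLeast1_atMost_eq[of "\<lambda>j. \<phi> (sorted_list_of_set U ! (j - 1))" "card U"] by simp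
  also have "\<dots> = (\<Sum>u\<in>U. \<phi> u)"
    by (rule sum.reindex_bij_betw, rule bij_betw_nth) (use assms in auto)
  finally show ?thesis .
qed

lemma proj_restrict:
  assumes "finite U" "U \<subseteq> J"
  shows "min_action (proj_U U B) f (card U) x = min_action (proj_U U (restrict B J)) f (card U) x"
proof (rule min_action_cong, intro ballI)
  fix i assume "i \<in> {1..card U}"
  hence "sorted_list_of_set U ! (i - 1) \<in> J" using sl_in[OF assms(1)] assms(2) by blast
  thus "proj_U U B i = proj_U U (restrict B J) i" by (simp add: proj_U_def)
qed

lemma bounded_diff:
  assumes "finite U" "U \<subseteq> J" "n \<le> card U" "\<forall>x. \<bar>f x\<bar> \<le> c" "b \<in> SS J" "i \<in> J"
  shows "\<bar>min_action (proj_U U b) f (card U) (int n) - min_action (proj_U U (b(i := - b i))) f (card U) (int n)\<bar> \<le> 2 * c"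
proof (rule min_action_lip[OF assms(3)], intro allI)
  fix \<gamma>
  define b' where "b' = b(i := - b i)"
  define xs where "xs = sorted_list_of_set U"
  have c0: "c \<ge> 0" using assms(4) by (meson abs_ge_zero order.trans)
  have "\<bar>action (proj_U U b) f (card U) \<gamma> - action (proj_U U b') f (card U) \<gamma>\<bar>
      = \<bar>\<Sum>j\<in>{1..card U}. (real_of_int (b (xs ! (j-1))) - real_of_int (b' (xs ! (j-1)))) * f (\<gamma> j)\<bar>"
    unfolding action_def proj_U_def xs_def by (simp add: sum_subtractf left_diff_distrib)
  also have "\<dots> \<le> (\<Sum>j\<in>{1..card U}. \<bar>(real_of_int (b (xs ! (j-1))) - real_of_int (b' (xs ! (j-1)))) * f (\<gamma> j)\<bar>)"
    by (rule sum_abs)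
  also have "\<dots> \<le> (\<Sum>j\<in>{1..card U}. \<bar>real_of_int (b (xs ! (j-1))) - real_of_int (b' (xs ! (j-1)))\<bar> * c)"
    by (intro sum_mono) (simp add: abs_mult mult_left_mono assms(4))
  also have "\<dots> = (\<Sum>u\<in>U. \<bar>real_of_int (b u) - real_of_int (b' u)\<bar> * c)"
    unfolding xs_def by (rule sum_sl[OF assms(1), where \<phi>="\<lambda>u. \<bar>real_of_int (b u) - real_of_int (b' u)\<bar> * c"])
  also have "\<dots> = (\<Sum>u\<in>U. if u = i then \<bar>2 * real_of_int (b i)\<bar> * c else 0)"
    by (intro sum.cong refl) (auto simp: b'_def)
  also have "\<dots> \<le> 2 * c"
  proof -
    have "b i \<in> {-1,1}" using assms(5,6) by (auto simp: SS_def PiE_iff)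
    hence e: "\<bar>2 * real_of_int (b i)\<bar> * c = 2 * c" by auto
    have "(\<Sum>u\<in>U. if u = i then \<bar>2 * real_of_int (b i)\<bar> * c else 0) = (if i \<in> U then \<bar>2 * real_of_int (b i)\<bar> * c else 0)"
      using assms(1) by (rule sum.delta)
    also have "\<dots> = (if i \<in> U then 2 * c else 0)" unfolding e ..
    also have "\<dots> \<le> 2 * c" using c0 by simp
    finally show ?thesis .
  qed
  finally show "\<bar>action (proj_U U b) f (card U) \<gamma> - action (proj_U U (b(i := - b i))) f (card U) \<gamma>\<bar> \<le> 2 * c"
    unfolding b'_def .
qed

lemma sum_SS_indep:
  fixes G :: "(nat \<Rightarrow> int) \<Rightarrow> real"
  assumes "finite I" "finite D" "D \<inter> I = {}" "\<And>b b'. (\<forall>i\<in>I. b i = b' i) \<Longrightarrow> G b = G b'"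
  shows "(\<Sum>b\<in>SS (I \<union> D). G b) = 2 ^ card D * (\<Sum>b\<in>SS I. G b)"
  using assms(2,3)
proof (induction D rule: finite_induct)
  case empty thus ?case by simp
next
  case (insert x D)
  have x: "x \<notin> I \<union> D" using insert by auto
  have "(\<Sum>b\<in>SS (I \<union> insert x D). G b) = (\<Sum>b\<in>SS (insert x (I \<union> D)). G b)" by simp
  also have "\<dots> = (\<Sum>b\<in>SS (I \<union> D). G (b(x:=1)) + G (b(x:=-1)))"
    by (rule sum_SS_insert) (use x assms(1) insert.hyps in auto)
  also have "\<dots> = (\<Sum>b\<in>SS (I \<union> D). 2 * G b)"
  proof (intro sum.cong refl)
    fix b
    have "G (b(x:=s)) = G b" for s using assms(4)[of "b(x:=s)" b] x by auto
    thus "G (b(x:=1)) + G (b(x:=-1)) = 2 * G b" by simp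
  qed
  also have "\<dots> = 2 * (\<Sum>b\<in>SS (I \<union> D). G b)" by (simp add: sum_distrib_left)
  also have "\<dots> = 2 * (2 ^ card D * (\<Sum>b\<in>SS I. G b))" using insert by simp
  finally show ?case using insert.hyps by simp
qed

lemma sum_SS_U:
  assumes "finite U" "\<And>r r'. (\<forall>i\<in>{1..card U}. r i = r' i) \<Longrightarrow> m r = m r'"
  shows "(\<Sum>c\<in>SS U. m (proj_U U c)) = (\<Sum>d\<in>SS {1..card U}. m d)"
proof -
  define k where "k = card U"
  define xs where "xs = sorted_list_of_set U"
  define \<psi> where "\<psi> c = restrict (proj_U U c) {1..k}" for c
  have mpsi: "m (proj_U U c) = m (\<psi> c)" for c by (rule assms(2)) (simp add: \<psi>_def k_def)
  have into: "\<psi> ` SS U \<subseteq> SS {1..k}"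
  proof
    fix d assume "d \<in> \<psi> ` SS U"
    then obtain c where c: "c \<in> SS U" "d = \<psi> c" by auto
    have "c (sorted_list_of_set U ! (j - 1)) \<in> {-1,1}" if "j \<in> {1..k}" for j
      using c(1) sl_in[OF assms(1), of j] that by (auto simp: SS_def PiE_iff k_def)
    thus "d \<in> SS {1..k}" using c(2) by (auto simp: SS_def \<psi>_def proj_U_def)
  qed
  have inj: "inj_on \<psi> (SS U)"
  proof
    fix c c' assume c: "c \<in> SS U" "c' \<in> SS U" "\<psi> c = \<psi> c'"
    have "c u = c' u" if "u \<in> U" for u
    proof -
      from that assms(1) obtain j where j: "j < length xs" "xs ! j = u"
        by (metis in_set_conv_nth sl_props(2) xs_def)
      have "Suc j \<in> {1..k}" using j assms(1) by (simp add: xs_def k_def)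
      hence "\<psi> c (Suc j) = c (xs ! j)" "\<psi> c' (Suc j) = c' (xs ! j)"
        by (simp_all add: \<psi>_def proj_U_def xs_def)
      thus ?thesis using c(3) j by simp
    qed
    note cu = this
    show "c = c'"
    proof (rule ext)
      fix x show "c x = c' x"
        using cu[of x] PiE_arb[of c U "\<lambda>_. {-1,1}" x] PiE_arb[of c' U "\<lambda>_. {-1,1}" x] c(1,2)
        by (cases "x \<in> U") (auto simp: SS_def)
    qed
  qed
  have img: "\<psi> ` SS U = SS {1..k}"
  proof (rule card_subset_eq[OF finite_SS into])
    show "card (\<psi> ` SS U) = card (SS {1..k})"
      using card_image[OF inj] assms(1) by (simp add: card_SS finite_SS k_def)
  qed simp
  have "(\<Sum>c\<in>SS U. m (proj_U U c)) = (\<Sum>c\<in>SS U. m (\<psi> c))" by (simp add: mpsi)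
  also have "\<dots> = (\<Sum>d\<in>\<psi> ` SS U. m d)" by (rule sum.reindex[OF inj, symmetric, unfolded comp_def])
  also have "\<dots> = (\<Sum>d\<in>SS {1..k}. m d)" by (simp add: img)
  finally show ?thesis by (simp add: k_def)
qed



lemma subsets_count:
  fixes S :: "'a set" and x :: real
  assumes "finite S" "0 < x" "x \<le> 1"
  shows "real (card {A\<in>Pow S. card A \<le> d}) \<le> (1 + x) ^ card S / x ^ d"
proof -
  have "real (card {A\<in>Pow S. card A \<le> d}) \<le> (\<Sum>A\<in>Pow S. x ^ card A / x ^ d)"
  proof (rule card_le_sum)
    fix A assume "A \<in> Pow S" "card A \<le> d"
    hence "x ^ d \<le> x ^ card A" using assms by (intro power_decreasing) auto
    thus "1 \<le> x ^ card A / x ^ d" using assms by simp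
  qed (use assms in auto)
  also have "\<dots> = (\<Sum>A\<in>Pow S. (\<Prod>a\<in>A. x) * (\<Prod>a\<in>S-A. 1)) / x ^ d"
    by (simp add: sum_divide_distrib)
  also have "(\<Sum>A\<in>Pow S. (\<Prod>a\<in>A. x) * (\<Prod>a\<in>S-A. 1)) = (\<Prod>a\<in>S. x + 1)"
    by (rule prod_add[symmetric]) (rule assms)
  also have "\<dots> = (1 + x) ^ card S" by (simp add: add.commute)
  finally show ?thesis .
qed

lemma subsets_count2:
  fixes S :: "'a set"
  assumes "finite S" "d > 0"
  shows "real (card {A\<in>Pow S. card A \<le> d}) \<le> ((real (card S) + real d) / real d) ^ d * exp (real d)"
proof -
  define N where "N = real (card S)"
  define x where "x = real d / (N + d)"
  have N: "N \<ge> 0" unfolding N_def by simp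
  have x: "0 < x" "x \<le> 1" using assms N unfolding x_def by (auto simp: field_simps)
  have "real (card {A\<in>Pow S. card A \<le> d}) \<le> (1 + x) ^ card S / x ^ d"
    by (rule subsets_count[OF assms(1) x])
  also have "(1 + x) ^ card S \<le> exp x ^ card S"
    using x by (intro power_mono) auto
  also have "exp x ^ card S = exp (x * N)" unfolding N_def by (simp add: exp_of_nat_mult[symmetric] mult.commute)
  also have "exp (x * N) \<le> exp d"
  proof -
    have "x * N \<le> d" unfolding x_def using N assms by (simp add: field_simps)
    thus ?thesis by simp
  qed
  finally have "real (card {A\<in>Pow S. card A \<le> d}) \<le> exp d / x ^ d"
    using x by (simp add: divide_right_mono)
  also have "exp d / x ^ d = ((N + d) / d) ^ d * exp d"
    unfolding x_def using assms N by (simp add: power_divide field_simps)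
  finally show ?thesis unfolding N_def by simp
qed




definition chU :: "nat \<Rightarrow> nat set \<Rightarrow> nat \<Rightarrow> bool" where
  "chU L U x \<longleftrightarrow> x = 0 \<or> x > L \<or> x \<in> U"

definition bdry :: "nat \<Rightarrow> nat set \<Rightarrow> nat set" where
  "bdry L U = {x\<in>{0..L}. chU L U x \<noteq> chU L U (Suc x)}"

lemma bdry_inj:
  assumes "U \<subseteq> {1..L}" "V \<subseteq> {1..L}" "bdry L U = bdry L V"
  shows "U = V"
proof -
  have ch: "chU L U x = chU L V x" for x
  proof (induction x)
    case 0 thus ?case by (simp add: chU_def)
  next
    case (Suc x)
    show ?case
    proof (cases "x \<le> L")
      case True
      have "(x \<in> bdry L U) = (x \<in> bdry L V)" using assms(3) by simp
      thus ?thesis using Suc True unfolding bdry_def by auto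
    next
      case False thus ?thesis by (simp add: chU_def)
    qed
  qed
  show ?thesis
  proof (intro set_eqI)
    fix u show "u \<in> U \<longleftrightarrow> u \<in> V"
      using ch[of u] assms(1,2) by (auto simp: chU_def)
  qed
qed

lemma bdry_card:
  assumes "U \<in> U_family L n m"
  shows "card (bdry L U) \<le> 2 * m + 2"
proof -
  from assms obtain a z :: "nat \<Rightarrow> nat" where
    az: "\<forall>i\<le>m. a i \<le> z i \<and> z i \<le> L"
    and U: "U = {1..L} - (\<Union>i\<le>m. {a i<..z i})"
    unfolding U_family_def by blast
  have sub: "bdry L U \<subseteq> a ` {..m} \<union> z ` {..m}"
  proof
    fix x assume x: "x \<in> bdry L U"
    hence xL: "x \<le> L" and ne: "chU L U x \<noteq> chU L U (Suc x)" by (auto simp: bdry_def)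
    show "x \<in> a ` {..m} \<union> z ` {..m}"
    proof (cases "chU L U x")
      case True
      hence nS: "\<not> chU L U (Suc x)" using ne by simp
      hence "Suc x \<notin> U" "Suc x \<le> L" by (auto simp: chU_def)
      then obtain i where i: "i \<le> m" "a i < Suc x" "Suc x \<le> z i" using U by auto
      have "x \<notin> {a i<..z i}"
      proof
        assume "x \<in> {a i<..z i}"
        hence "x \<noteq> 0" "x \<notin> U" using U i by auto
        thus False using True xL by (auto simp: chU_def)
      qed
      hence "x = a i" using i by auto
      thus ?thesis using i by auto
    next
      case False
      hence "x \<notin> U" "x \<noteq> 0" by (auto simp: chU_def)
      then obtain i where i: "i \<le> m" "a i < x" "x \<le> z i" using U xL by auto
      have S: "chU L U (Suc x)" using ne False by simp
      have "Suc x \<notin> {a i<..z i}"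
      proof
        assume as: "Suc x \<in> {a i<..z i}"
        have "z i \<le> L" using az i by auto
        hence "Suc x \<le> L" using as by auto
        moreover have "Suc x \<notin> U" unfolding U using as i(1) by blast
        ultimately have "Suc x \<le> L" "Suc x \<notin> U" by auto
        thus False using S by (auto simp: chU_def)
      qed
      hence "x = z i" using i by auto
      thus ?thesis using i by auto
    qed
  qed
  have "card (bdry L U) \<le> card (a ` {..m} \<union> z ` {..m})" by (intro card_mono sub) auto
  also have "\<dots> \<le> card (a ` {..m}) + card (z ` {..m})" by (rule card_Un_le)
  also have "\<dots> \<le> card {..m} + card {..m}" by (intro add_mono card_image_le) auto
  finally show ?thesis by simp
qed

lemma U_family_sub: "U \<in> U_family L n m \<Longrightarrow> U \<subseteq> {1..L}"
  by (simp add: U_family_def)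

lemma U_family_finite: "finite (U_family L n m)"
  by (rule finite_subset[of _ "Pow {1..L}"]) (auto simp: U_family_def)




lemma U_family_count:
  "real (card (U_family L n m)) \<le> ((real (Suc L) + real (2*m+2)) / real (2*m+2)) ^ (2*m+2) * exp (real (2*m+2))"
proof -
  have inj: "inj_on (bdry L) (U_family L n m)"
  proof (rule inj_onI)
    fix U V assume uv: "U \<in> U_family L n m" "V \<in> U_family L n m" "bdry L U = bdry L V"
    show "U = V" by (rule bdry_inj[OF U_family_sub[OF uv(1)] U_family_sub[OF uv(2)] uv(3)])
  qed
  have into: "bdry L ` U_family L n m \<subseteq> {A\<in>Pow {0..L}. card A \<le> 2*m+2}"
  proof
    fix A assume "A \<in> bdry L ` U_family L n m"
    then obtain U where U: "U \<in> U_family L n m" "A = bdry L U" by blast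
    have "A \<subseteq> {0..L}" unfolding U(2) bdry_def by blast
    moreover have "card A \<le> 2*m+2" using bdry_card[OF U(1)] U(2) by simp
    ultimately show "A \<in> {A\<in>Pow {0..L}. card A \<le> 2*m+2}" by blast
  qed
  have "card (U_family L n m) = card (bdry L ` U_family L n m)" using card_image[OF inj] by simp
  also have "\<dots> \<le> card {A\<in>Pow {0..L}. card A \<le> 2*m+2}" by (rule card_mono[OF _ into]) simp
  finally have "real (card (U_family L n m)) \<le> real (card {A\<in>Pow {0..L}. card A \<le> 2*m+2})" by simp
  also have "\<dots> \<le> ((real (card {0..L}) + real (2*m+2)) / real (2*m+2)) ^ (2*m+2) * exp (real (2*m+2))"
    by (rule subsets_count2) auto
  also have "card {0..L} = Suc L" by simp
  finally show ?thesis .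
qed



lemma expo_eq:
  fixes m n l e :: real
  assumes "m > 0" "n > 0" "l > 0"
  shows "((m/n) powr (1/2 - e/2))\<^sup>2 * (l powr (1/2 + e/2))\<^sup>2 * n / l = m * (l * n / m) powr e"
proof -
  have "((m/n) powr (1/2 - e/2))\<^sup>2 = (m/n) powr (1 + (-e))"
    by (simp add: power2_eq_square flip: powr_add)
  also have "\<dots> = (m/n) * (m/n) powr (-e)" by (subst powr_add) (use assms in simp)
  finally have A: "((m/n) powr (1/2 - e/2))\<^sup>2 = (m/n) * (m/n) powr (-e)" .
  have "(l powr (1/2 + e/2))\<^sup>2 = l powr (1 + e)"
    by (simp add: power2_eq_square flip: powr_add)
  also have "\<dots> = l * l powr e" by (subst powr_add) (use assms in simp)
  finally have B: "(l powr (1/2 + e/2))\<^sup>2 = l * l powr e" .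
  have C: "(m/n) powr (-e) = n powr e / m powr e"
    using assms by (simp add: powr_minus powr_divide field_simps)
  have D: "(l * n / m) powr e = l powr e * n powr e / m powr e"
    using assms by (simp add: powr_divide powr_mult)
  show ?thesis unfolding A B C D using assms by (simp add: field_simps)
qed

lemma expo_bound:
  fixes m n l c K e :: real and L :: nat
  assumes "m > 0" "n > 0" "l > 0" "L > 0" "real L \<le> l * n" "c > 0" "K > 0"
  defines "t \<equiv> c * sqrt (2*K) * (m/n) powr (1/2 - e/2) * l powr (1/2 + e/2) * n"
  shows "2 * t\<^sup>2 / (real L * (2*c)\<^sup>2) \<ge> K * (m * (l * n / m) powr e)"
proof -
  define P where "P = ((m/n) powr (1/2 - e/2))\<^sup>2 * (l powr (1/2 + e/2))\<^sup>2"
  have P0: "P \<ge> 0" unfolding P_def by simp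
  have "2 * t\<^sup>2 / (real L * (2*c)\<^sup>2) = K * P * n\<^sup>2 / real L"
    unfolding t_def P_def using assms by (simp add: power_mult_distrib field_simps)
  also have "\<dots> \<ge> K * P * n\<^sup>2 / (l * n)"
    using assms P0 by (intro divide_left_mono) (auto intro!: mult_nonneg_nonneg)
  finally have "2 * t\<^sup>2 / (real L * (2*c)\<^sup>2) \<ge> K * (P * n / l)"
    using assms by (simp add: power2_eq_square field_simps)
  also have "P * n / l = m * (l * n / m) powr e"
    unfolding P_def by (rule expo_eq) (use assms in auto)
  finally show ?thesis .
qed

lemma count_bound':
  fixes m n l e :: real and L :: nat and d :: nat
  assumes "m \<ge> 1" "m \<le> n" "l > 1" "real L \<le> l * n" "e > 0" "real d = 2*m+2"
  shows "((real (Suc L) + real d) / real d) ^ d * exp (real d) \<le> exp (4 * m * (3 + 1/e) * (l * n / m) powr e)"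
proof -
  define y where "y = l * n / m"
  define z where "z = y powr e"
  have n1: "n \<ge> 1" using assms by simp
  have lnn: "n \<le> l * n" using mult_right_mono[of 1 l n] assms by simp
  have "m \<le> l * n" using lnn assms by linarith
  hence y1: "y \<ge> 1" unfolding y_def using assms by (simp add: field_simps)
  have z1: "z \<ge> 1" unfolding z_def using y1 assms ge_one_powr_ge_zero by simp
  define r where "r = (real (Suc L) + real d) / real d"
  have d0: "real d > 0" using assms by simp
  have r1: "r \<ge> 1" unfolding r_def using d0 by (simp add: field_simps)
  have r3: "r \<le> 3 * y"
  proof -
    have "m * (real (Suc L) + real d) \<le> 3 * (l * n) * real d"
    proof -
      have "real (Suc L) + real d \<le> 6 * (l * n)"
        using assms n1 lnn by (simp; linarith)
      hence "m * (real (Suc L) + real d) \<le> m * (6 * (l * n))" using assms by (intro mult_left_mono) auto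
      also have "\<dots> \<le> 3 * (l * n) * real d"
      proof -
        have "m * (6 * (l * n)) = 3 * (l * n) * (2 * m)" by simp
        also have "\<dots> \<le> 3 * (l * n) * real d" using assms lnn n1 by (intro mult_left_mono) auto
        finally show ?thesis .
      qed
      finally show ?thesis .
    qed
    thus ?thesis unfolding r_def y_def using d0 assms by (simp add: field_simps)
  qed
  have "r ^ d \<le> (3*y) ^ d" using r1 r3 by (intro power_mono) auto
  also have "(3*y) ^ d = exp (real d * ln (3*y))"
  proof -
    have "exp (real d * ln (3*y)) = exp (ln (3*y)) ^ d" by (rule exp_of_nat_mult)
    also have "\<dots> = (3*y) ^ d" using y1 by simp
    finally show ?thesis by simp
  qed
  finally have "r ^ d * exp (real d) \<le> exp (real d * ln (3*y)) * exp (real d)" by simp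
  also have "\<dots> = exp (real d * (1 + ln (3*y)))" by (simp add: algebra_simps flip: exp_add)
  also have "\<dots> \<le> exp (4 * m * (1 + ln 3 + ln y))"
  proof -
    have l3: "ln (3*y) = ln 3 + ln y" using y1 by (simp add: ln_mult)
    have "1 + ln (3*y) \<ge> 0" using y1 by (simp add: l3)
    moreover have "real d \<le> 4 * m" using assms by simp
    ultimately have "real d * (1 + ln (3*y)) \<le> 4 * m * (1 + ln (3*y))" by (intro mult_right_mono)
    thus ?thesis by (simp add: l3 add.assoc)
  qed
  also have "\<dots> \<le> exp (4 * m * (3 + 1/e) * z)"
  proof -
    have "ln (3::real) \<le> 3 - 1" by (rule ln_le_minus_one) simp
    hence a: "1 + ln 3 \<le> 3 * z" using z1 by simp
    have "ln z \<le> z - 1" using z1 by (intro ln_le_minus_one) simp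
    moreover have "ln z = e * ln y" unfolding z_def using y1 by (simp add: ln_powr)
    ultimately have "e * ln y \<le> z" by simp
    hence b: "ln y \<le> z / e" using assms by (simp add: field_simps)
    have "1 + ln 3 + ln y \<le> (3 + 1/e) * z" using a b by (simp add: algebra_simps)
    hence "4 * m * (1 + ln 3 + ln y) \<le> 4 * m * ((3 + 1/e) * z)" using assms by (intro mult_left_mono) auto
    thus ?thesis by (simp add: mult.assoc)
  qed
  finally show ?thesis unfolding r_def z_def y_def .
qed

lemma mz_bound:
  fixes m n l e :: real
  assumes "m \<ge> 1" "m \<le> n" "l \<ge> 1" "e > 0" "e \<le> 1"
  shows "m * (l * n / m) powr e \<ge> m" "m * (l * n / m) powr e \<ge> n powr e"
proof -
  have lnn: "n \<le> l * n" using mult_right_mono[of 1 l n] assms by simp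
  have "m \<le> l * n" using lnn assms by linarith
  hence y1: "l * n / m \<ge> 1" using assms by (simp add: field_simps)
  hence "(l * n / m) powr e \<ge> 1" using assms ge_one_powr_ge_zero by simp
  thus "m * (l * n / m) powr e \<ge> m" using assms by simp
  have "m * (l * n / m) powr e = m * (l * n) powr e / m powr e"
    using assms by (simp add: powr_divide)
  also have "\<dots> \<ge> (l * n) powr e"
  proof -
    have "m powr e \<le> m powr 1" using assms by (intro powr_mono) auto
    hence "m powr e \<le> m" using assms by simp
    moreover have "m powr e > 0" using assms by simp
    ultimately show ?thesis using assms by (simp add: field_simps mult_right_mono)
  qed
  also have "(l * n) powr e \<ge> n powr e"
    using assms by (intro powr_mono2) (auto simp: mult_right_mono) 
  finally show "m * (l * n / m) powr e \<ge> n powr e" by simp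
qed



lemma per_m_bound:
  fixes c \<kappa> l :: real and n m L :: nat
  assumes "c > 0" "0 < \<kappa>" "\<kappa> < 1/3" "l > 1" "1 \<le> m" "m \<le> n" "0 < L" "real L \<le> l * n"
  defines "K \<equiv> 24 + 16/\<kappa>"
  defines "t \<equiv> c * sqrt (2*K) * (real m / real n) powr (1/2 - \<kappa>/4) * l powr (1/2 + \<kappa>/4) * real n"
  shows "real (card (U_family L n m)) * (2 * exp (- 2 * t\<^sup>2 / (real L * (2*c)\<^sup>2)))
          \<le> 2 * exp (- (real m + real n powr (\<kappa>/2)))"
proof -
  define e where "e = \<kappa>/2"
  have e: "e > 0" "e \<le> 1" using assms by (auto simp: e_def)
  have K: "K > 0" unfolding K_def using assms by (simp add: add_pos_pos)
  define z where "z = real m * (l * real n / real m) powr e"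
  have z: "z \<ge> real m" "z \<ge> real n powr e"
    unfolding z_def using mz_bound[of "real m" "real n" l e] assms e by auto
  have cnt: "real (card (U_family L n m)) \<le> exp (K/2 * z)"
  proof -
    have "real (card (U_family L n m)) \<le> ((real (Suc L) + real (2*m+2)) / real (2*m+2)) ^ (2*m+2) * exp (real (2*m+2))"
      by (rule U_family_count)
    also have "\<dots> \<le> exp (4 * real m * (3 + 1/e) * (l * real n / real m) powr e)"
      by (rule count_bound') (use assms e in auto)
    also have "4 * real m * (3 + 1/e) * (l * real n / real m) powr e = K/2 * z"
      unfolding z_def K_def e_def using assms by (simp add: field_simps)
    finally show ?thesis .
  qed
  have ex: "2 * t\<^sup>2 / (real L * (2*c)\<^sup>2) \<ge> K * z"
  proof -
    have tt: "t = c * sqrt (2*K) * (real m / real n) powr (1/2 - e/2) * l powr (1/2 + e/2) * real n"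
      unfolding t_def e_def by simp
    show ?thesis unfolding tt z_def
      by (rule expo_bound) (use assms K in auto)
  qed
  have "real (card (U_family L n m)) * (2 * exp (- 2 * t\<^sup>2 / (real L * (2*c)\<^sup>2)))
      \<le> exp (K/2 * z) * (2 * exp (- (K * z)))"
    using cnt ex by (intro mult_mono) auto
  also have "\<dots> = 2 * exp (- (K/2 * z))" by (simp add: field_simps flip: exp_add)
  also have "\<dots> \<le> 2 * exp (- (real m + real n powr (\<kappa>/2)))"
  proof -
    have "K/2 \<ge> 2" unfolding K_def using assms by (simp add: field_simps)
    moreover have "z \<ge> 0" using z(1) by simp
    ultimately have "K/2 * z \<ge> 2 * z" by (intro mult_right_mono) auto
    moreover have "2 * z \<ge> real m + real n powr (\<kappa>/2)" using z unfolding e_def by simp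
    ultimately show ?thesis by simp
  qed
  finally show ?thesis .
qed

lemma geom_exp: "(\<Sum>m\<in>{1..n}. exp (- real m)) \<le> 1 - exp (- real n)"
proof (induction n)
  case 0 thus ?case by simp
next
  case (Suc n)
  have e2: "2 \<le> exp (1::real)" using exp_ge_add_one_self[of 1] by simp
  have "exp (- real n) = exp 1 * exp (- real (Suc n))" by (simp flip: exp_add)
  also have "\<dots> \<ge> 2 * exp (- real (Suc n))" using e2 by (intro mult_right_mono) auto
  finally have "2 * exp (- real (Suc n)) \<le> exp (- real n)" .
  moreover have "(\<Sum>m\<in>{1..Suc n}. exp (- real m)) = (\<Sum>m\<in>{1..n}. exp (- real m)) + exp (- real (Suc n))"
    by simp
  ultimately show ?case using Suc by simp
qed



lemma avg_eq_integral:
  fixes f :: "int \<Rightarrow> real" and x :: int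
  assumes "finite J" "U \<subseteq> J"
  shows "avg J (\<lambda>b. min_action (proj_U U b) f (card U) x)
       = (\<integral>B'. min_action B' f (card U) x \<partial>sign_seq_measure)"
proof -
  define k where "k = card U"
  define h where "h r = min_action r f k x" for r
  have finU: "finite U" using assms finite_subset by blast
  have hcong: "h r = h r'" if "\<forall>i\<in>{1..card U}. r i = r' i" for r r'
    unfolding h_def k_def by (rule min_action_cong) (use that in simp)
  have int: "(\<integral>B'. min_action B' f k x \<partial>sign_seq_measure) = (\<Sum>d\<in>SS {1..k}. h d) / 2 ^ k"
  proof -
    have "(\<integral>B'. min_action B' f k x \<partial>sign_seq_measure) = (\<integral>B'. h (restrict B' {1..k}) \<partial>sign_seq_measure)"
      unfolding h_def by (intro Bochner_Integration.integral_cong refl min_action_cong) simp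
    also have "\<dots> = (\<Sum>d\<in>SS {1..k}. h d) / 2 ^ card {1..k}" by (rule restrict_integral) simp
    finally show ?thesis by simp
  qed
  have JU: "J = U \<union> (J - U)" using assms by blast
  have "(\<Sum>b\<in>SS J. h (proj_U U b)) = (\<Sum>b\<in>SS (U \<union> (J - U)). h (proj_U U b))" using JU by simp
  also have "\<dots> = 2 ^ card (J - U) * (\<Sum>b\<in>SS U. h (proj_U U b))"
  proof (rule sum_SS_indep)
    fix b b' :: "nat \<Rightarrow> int" assume bb: "\<forall>i\<in>U. b i = b' i"
    show "h (proj_U U b) = h (proj_U U b')"
    proof (rule hcong, intro ballI)
      fix i assume "i \<in> {1..card U}"
      thus "proj_U U b i = proj_U U b' i" using sl_in[OF finU] bb by (simp add: proj_U_def)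
    qed
  qed (use finU assms in auto)
  also have "(\<Sum>b\<in>SS U. h (proj_U U b)) = (\<Sum>d\<in>SS {1..card U}. h d)"
    by (rule sum_SS_U[OF finU hcong])
  finally have "(\<Sum>b\<in>SS J. h (proj_U U b)) = 2 ^ card (J - U) * (\<Sum>d\<in>SS {1..k}. h d)"
    by (simp add: k_def)
  moreover have "card J = card (J - U) + k"
    using card_Diff_subset[OF finU assms(2)] card_mono[OF assms] unfolding k_def by simp
  ultimately have "avg J (\<lambda>b. h (proj_U U b)) = (\<Sum>d\<in>SS {1..k}. h d) / 2 ^ k"
    unfolding avg_def by (simp add: power_add)
  thus ?thesis using int by (simp add: h_def k_def)
qed



lemma main_bound:
  fixes c \<kappa> l :: real and f :: "int \<Rightarrow> real" and n L :: nat
  assumes "c>0" "0<\<kappa>" "\<kappa><1/3" "l>1" "\<forall>x. \<bar>f x\<bar> \<le> c" "n \<ge> 1" "L = nat \<lfloor>l * real n\<rfloor>"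
  defines "K \<equiv> 24 + 16/\<kappa>"
  shows "measure sign_seq_measure {B \<in> space sign_seq_measure.
             \<forall>m\<in>{1..n}. \<forall>U\<in>U_family L n m.
               \<bar>min_action (proj_U U B) f (card U) (int n)
                 - (\<integral>B'. min_action B' f (card U) (int n) \<partial>sign_seq_measure)\<bar>
               < c * sqrt (2*K) * (real m / real n) powr (1/2 - \<kappa>/4) * l powr (1/2 + \<kappa>/4) * real n}
         \<ge> 1 - 2 * exp (- (real n powr (\<kappa>/2)))"
proof -
  define J where "J = {1..L}"
  define t where "t m = c * sqrt (2*K) * (real m / real n) powr (1/2 - \<kappa>/4) * l powr (1/2 + \<kappa>/4) * real n" for m :: nat
  define \<mu> where "\<mu> U = (\<integral>B'. min_action B' f (card U) (int n) \<partial>sign_seq_measure)" for U :: "nat set"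
  define g where "g U b = min_action (proj_U U b) f (card U) (int n)" for U :: "nat set" and b
  define Bad where "Bad = {r. \<exists>m\<in>{1..n}. \<exists>U\<in>U_family L n m. t m \<le> \<bar>g U r - \<mu> U\<bar>}"
  have K: "K > 0" unfolding K_def using assms by (simp add: add_pos_pos)
  have finJ: "finite J" "card J = L" unfolding J_def by auto
  have ln0: "l * real n \<ge> 0" using assms by simp
  have Lle: "real L \<le> l * real n" using assms(7) ln0 by simp
  have "real n \<le> l * real n" using mult_right_mono[of 1 l "real n"] assms by simp
  hence "int n \<le> \<lfloor>l * real n\<rfloor>" by (simp add: le_floor_iff)
  hence Lge: "n \<le> L" using assms(7) by simp
  have L0: "L > 0" using Lge assms(6) by linarith
  have fam: "finite U" "U \<subseteq> J" "n \<le> card U" if "U \<in> U_family L n m" for U m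
    using that finite_subset[of U "{1..L}"] by (auto simp: U_family_def J_def)
  have t0: "t m > 0" if "m \<ge> 1" for m
    unfolding t_def using assms K that by (intro mult_pos_pos) auto
  have seteq: "{B \<in> space sign_seq_measure.
             \<forall>m\<in>{1..n}. \<forall>U\<in>U_family L n m.
               \<bar>min_action (proj_U U B) f (card U) (int n)
                 - (\<integral>B'. min_action B' f (card U) (int n) \<partial>sign_seq_measure)\<bar>
               < c * sqrt (2*K) * (real m / real n) powr (1/2 - \<kappa>/4) * l powr (1/2 + \<kappa>/4) * real n}
      = space sign_seq_measure - {B. restrict B J \<in> Bad}"
  proof -
    have eq: "min_action (proj_U U B) f (card U) (int n) = g U (restrict B J)" if "U \<in> U_family L n m" for U m B
      unfolding g_def by (rule proj_restrict) (use fam[OF that] in auto)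
    show ?thesis
      unfolding Bad_def t_def[symmetric] \<mu>_def[symmetric] by (auto simp: eq not_less) (force simp: not_less)+
  qed
  have meas: "{B. restrict B J \<in> Bad} \<in> sets sign_seq_measure" by (rule restrict_sets[OF finJ(1)])
  have pm: "measure sign_seq_measure {B. restrict B J \<in> Bad} \<le> real (card (Bad \<inter> SS J)) / 2 ^ L"
    using restrict_measure_le[OF finJ(1), of Bad] finJ(2) by simp
  define E where "E m = exp (- 2 * (t m)\<^sup>2 / (real L * (2*c)\<^sup>2))" for m
  have sub: "Bad \<inter> SS J \<subseteq> (\<Union>m\<in>{1..n}. \<Union>U\<in>U_family L n m. {b\<in>SS J. \<bar>g U b - avg J (g U)\<bar> \<ge> t m})"
  proof
    fix r assume "r \<in> Bad \<inter> SS J"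
    then obtain m U where mU: "m \<in> {1..n}" "U \<in> U_family L n m" "t m \<le> \<bar>g U r - \<mu> U\<bar>" "r \<in> SS J"
      unfolding Bad_def by blast
    have "avg J (g U) = \<mu> U"
      unfolding g_def \<mu>_def by (rule avg_eq_integral[OF finJ(1) fam(2)[OF mU(2)]])
    hence "r \<in> {b\<in>SS J. \<bar>g U b - avg J (g U)\<bar> \<ge> t m}" using mU by simp
    thus "r \<in> (\<Union>m\<in>{1..n}. \<Union>U\<in>U_family L n m. {b\<in>SS J. \<bar>g U b - avg J (g U)\<bar> \<ge> t m})"
      using mU(1,2) by blast
  qed
  have tail: "real (card {b\<in>SS J. \<bar>g U b - avg J (g U)\<bar> \<ge> t m}) \<le> 2 * 2 ^ L * E m"
    if "m \<in> {1..n}" "U \<in> U_family L n m" for m U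
  proof -
    have "real (card {b\<in>SS J. \<bar>g U b - avg J (g U)\<bar> \<ge> t m}) \<le> 2 * 2 ^ card J * exp (- 2 * (t m)\<^sup>2 / (card J * (2*c)\<^sup>2))"
    proof (rule tail_bound[OF finJ(1)])
      show "\<forall>b\<in>SS J. \<forall>i\<in>J. \<bar>g U b - g U (b(i := - b i))\<bar> \<le> 2 * c"
        unfolding g_def using bounded_diff[OF fam(1,2,3)[OF that(2)] assms(5)] by blast
    qed (use assms finJ L0 t0 that in auto)
    thus ?thesis unfolding E_def finJ(2) .
  qed
  have "real (card (Bad \<inter> SS J)) \<le> real (card (\<Union>m\<in>{1..n}. \<Union>U\<in>U_family L n m. {b\<in>SS J. \<bar>g U b - avg J (g U)\<bar> \<ge> t m}))"
    by (intro of_nat_mono card_mono sub) (auto intro!: finite_UN_I U_family_finite finite_SS finJ)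
  also have "\<dots> \<le> real (\<Sum>m\<in>{1..n}. card (\<Union>U\<in>U_family L n m. {b\<in>SS J. \<bar>g U b - avg J (g U)\<bar> \<ge> t m}))"
    by (intro of_nat_mono card_UN_le) simp
  also have "\<dots> \<le> real (\<Sum>m\<in>{1..n}. \<Sum>U\<in>U_family L n m. card {b\<in>SS J. \<bar>g U b - avg J (g U)\<bar> \<ge> t m})"
    by (intro of_nat_mono sum_mono card_UN_le U_family_finite)
  also have "\<dots> = (\<Sum>m\<in>{1..n}. \<Sum>U\<in>U_family L n m. real (card {b\<in>SS J. \<bar>g U b - avg J (g U)\<bar> \<ge> t m}))"
    by simp
  also have "\<dots> \<le> (\<Sum>m\<in>{1..n}. \<Sum>U\<in>U_family L n m. 2 * 2 ^ L * E m)"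
    by (intro sum_mono tail)
  also have "\<dots> = 2 ^ L * (\<Sum>m\<in>{1..n}. real (card (U_family L n m)) * (2 * E m))"
    by (simp add: sum_distrib_left algebra_simps)
  also have "\<dots> \<le> 2 ^ L * (\<Sum>m\<in>{1..n}. 2 * exp (- (real m + real n powr (\<kappa>/2))))"
  proof (intro mult_left_mono sum_mono)
    fix m assume m: "m \<in> {1..n}"
    show "real (card (U_family L n m)) * (2 * E m) \<le> 2 * exp (- (real m + real n powr (\<kappa>/2)))"
      unfolding E_def t_def K_def by (rule per_m_bound) (use assms m L0 Lle in auto)
  qed simp
  also have "(\<Sum>m\<in>{1..n}. 2 * exp (- (real m + real n powr (\<kappa>/2)))) = 2 * exp (- (real n powr (\<kappa>/2))) * (\<Sum>m\<in>{1..n}. exp (- real m))"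
  proof -
    have "(\<Sum>m\<in>{1..n}. 2 * exp (- (real m + real n powr (\<kappa>/2)))) = (\<Sum>m\<in>{1..n}. 2 * exp (- (real n powr (\<kappa>/2))) * exp (- real m))"
      by (intro sum.cong refl) (simp add: mult.assoc flip: exp_add)
    thus ?thesis by (simp add: sum_distrib_left)
  qed
  also have "\<dots> \<le> 2 * exp (- (real n powr (\<kappa>/2))) * 1"
  proof (intro mult_left_mono)
    show "(\<Sum>m\<in>{1..n}. exp (- real m)) \<le> 1"
      using geom_exp[of n] exp_gt_zero[of "- real n"] by linarith
  qed simp
  finally have cb: "real (card (Bad \<inter> SS J)) / 2 ^ L \<le> 2 * exp (- (real n powr (\<kappa>/2)))"
    by (simp add: field_simps)
  have "measure sign_seq_measure (space sign_seq_measure - {B. restrict B J \<in> Bad}) = 1 - measure sign_seq_measure {B. restrict B J \<in> Bad}"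
    by (rule S.prob_compl[OF meas])
  also have "\<dots> \<ge> 1 - 2 * exp (- (real n powr (\<kappa>/2)))" using pm cb by simp
  finally show ?thesis unfolding seteq .
qed



lemma exp_neg_le_powr:
  assumes "n \<ge> 1" "p > 0"
  shows "exp (- (real n powr p)) \<le> real n powr (- p)"
proof -
  define x where "x = real n powr p"
  have x: "x > 0" unfolding x_def using assms by simp
  have "x \<le> exp x" using exp_ge_add_one_self[of x] by linarith
  hence "inverse (exp x) \<le> inverse x" using x by (intro le_imp_inverse_le) auto
  thus ?thesis unfolding x_def using assms by (simp add: exp_minus powr_minus)
qed

theorem mainTheorem18:
  fixes c \<kappa> :: real
  assumes "c > 0" and "0 < \<kappa>" and "\<kappa> < 1/3"
  shows "\<exists>c\<^sub>\<kappa> > 0. \<forall>l::real. l > 1 \<longrightarrow>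
    (\<forall>f :: int \<Rightarrow> real. (\<forall>x. \<bar>f x\<bar> \<le> c) \<longrightarrow>
      ((\<lambda>n::nat. measure sign_seq_measure
          {B \<in> space sign_seq_measure.
             \<forall>m\<in>{1..n}. \<forall>U\<in>U_family (nat \<lfloor>l * real n\<rfloor>) n m.
               \<bar>min_action (proj_U U B) f (card U) (int n)
                 - (\<integral>B'. min_action B' f (card U) (int n) \<partial>sign_seq_measure)\<bar>
               < c\<^sub>\<kappa> * (real m / real n) powr (1/2 - \<kappa>/4) * l powr (1/2 + \<kappa>/4) * real n})
       \<longlonglongrightarrow> 1))"
proof (intro exI[of _ "c * sqrt (2 * (24 + 16/\<kappa>))"] conjI allI impI)
  show "c * sqrt (2 * (24 + 16/\<kappa>)) > 0" using assms by (simp add: add_pos_pos)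
next
  fix l :: real and f :: "int \<Rightarrow> real"
  assume l: "l > 1" and f: "\<forall>x. \<bar>f x\<bar> \<le> c"
  define P where "P n = measure sign_seq_measure
          {B \<in> space sign_seq_measure.
             \<forall>m\<in>{1..n}. \<forall>U\<in>U_family (nat \<lfloor>l * real n\<rfloor>) n m.
               \<bar>min_action (proj_U U B) f (card U) (int n)
                 - (\<integral>B'. min_action B' f (card U) (int n) \<partial>sign_seq_measure)\<bar>
               < c * sqrt (2 * (24 + 16/\<kappa>)) * (real m / real n) powr (1/2 - \<kappa>/4) * l powr (1/2 + \<kappa>/4) * real n}" for n
  have low: "eventually (\<lambda>n. 1 - 2 * real n powr (- (\<kappa>/2)) \<le> P n) sequentially"
  proof (rule eventually_sequentiallyI[of 1])
    fix n :: nat assume n: "n \<ge> 1"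
    have "1 - 2 * real n powr (- (\<kappa>/2)) \<le> 1 - 2 * exp (- (real n powr (\<kappa>/2)))"
      using exp_neg_le_powr[OF n, of "\<kappa>/2"] assms by simp
    also have "\<dots> \<le> P n"
      unfolding P_def by (rule main_bound[OF assms l f n refl])
    finally show "1 - 2 * real n powr (- (\<kappa>/2)) \<le> P n" .
  qed
  have up: "eventually (\<lambda>n. P n \<le> 1) sequentially"
    unfolding P_def by (intro always_eventually allI S.prob_le_1)
  have lim: "(\<lambda>n. 1 - 2 * real n powr (- (\<kappa>/2))) \<longlonglongrightarrow> 1"
  proof -
    have "(\<lambda>n. real n powr (- (\<kappa>/2))) \<longlonglongrightarrow> 0"
      by (rule tendsto_neg_powr) (use assms filterlim_real_sequentially in auto)
    hence "(\<lambda>n. 1 - 2 * real n powr (- (\<kappa>/2))) \<longlonglongrightarrow> 1 - 2 * 0"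
      by (intro tendsto_intros)
    thus ?thesis by simp
  qed
  have "P \<longlonglongrightarrow> 1" by (rule tendsto_sandwich[OF low up lim tendsto_const])
  thus "(\<lambda>n::nat. measure sign_seq_measure
          {B \<in> space sign_seq_measure.
             \<forall>m\<in>{1..n}. \<forall>U\<in>U_family (nat \<lfloor>l * real n\<rfloor>) n m.
               \<bar>min_action (proj_U U B) f (card U) (int n)
                 - (\<integral>B'. min_action B' f (card U) (int n) \<partial>sign_seq_measure)\<bar>
               < c * sqrt (2 * (24 + 16/\<kappa>)) * (real m / real n) powr (1/2 - \<kappa>/4) * l powr (1/2 + \<kappa>/4) * real n})
       \<longlonglongrightarrow> 1" unfolding P_def .
qed

end
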